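(* Fix an architecture $(\mathbf d,\mathbf k,\mathbf s)$ of depth $N$ and let $k_v=k_1+\sum_{i=2}^N(k_i-1)\prod_{m=1}^{i-1}s_m$. For every $T>0$ and all real numbers $\delta_1,\dots,\delta_{N-1}$ there exists a constant $\tau=\tau(T,k_v,\delta_1,\dots,\delta_{N-1})$ such that the following holds: whenever $\vec w=(w^{(1)},\dots,w^{(N)})$ with $w^{(i)}\in\mathbb{R}^{k_i}$ satisfies $\|\pi(\vec w)\|_1\le T$ and $\|w^{(i+1)}\|_2^2-\|w^{(i)}\|_2^2=\delta_i$ for $i=1,\dots,N-1$, then \[ \|w^{(i)}\|_2^2\le\tau\qquad\text{for all } i\in\{1,\dots,N\}. \]
   Context: An architecture of depth $N$ is a triple $(\mathbf d,\mathbf k,\mathbf s)=((d_0,\dots,d_N),(k_1,\dots,k_N),(s_1,\dots,s_N))$ of positive integers with $d_i=\frac{d_{i-1}-k_i}{s_i}+1$ for $i=1,\dots,N$. For a filter $w\in\mathbb{R}^{k}$ and stride $s$, the convolutional matrix $\Pi_{(d',d''),k,s}(w)\in\mathbb{R}^{d''\times d'}$ has entries $W_{j,(j-1)s+n}=w_n$ for $j\in\{1,\dots,d''\}$, $n\in\{1,\dots,k\}$, and zeros elsewhere. For $\vec w=(w^{(1)},\dots,w^{(N)})$, $\Pi(\vec w):=W_N\cdots W_1$ with $W_i=\Pi_{(d_{i-1},d_i),k_i,s_i}(w^{(i)})$; this is a convolutional matrix with stride $\prod_i s_i$ and filter width $k_v$, and its filter $v=\pi(\vec w)\in\mathbb{R}^{k_v}$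 is the final filter. Equivalently, $\sum_{j=0}^{k_v-1}v_{j+1}x^j=\prod_{i=1}^N\sum_{j=0}^{k_i-1}w^{(i)}_{j+1}x^{j\prod_{n=1}^{i-1}s_n}$. $\|\cdot\|_1$ and $\|\cdot\|_2$ are the usual vector norms. *)

theory Defs
  imports Main "HOL.Real"
begin

definition is_architecture :: "nat \<Rightarrow> (nat \<Rightarrow> nat) \<Rightarrow> (nat \<Rightarrow> nat) \<Rightarrow> (nat \<Rightarrow> nat) \<Rightarrow> bool" where
  "is_architecture N d k s \<longleftrightarrow>
     (\<forall>i\<le>N. 0 < d i) \<and>
     (\<forall>i\<in>{1..N}. 0 < k i \<and> 0 < s i \<and>
        real (d i) = (real (d (i - 1)) - real (k i)) / real (s i) + 1)"

text \<open>Matrices are represented as functions of (row, column), 1-indexed.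
  The filter w is 1-indexed: w 1, ..., w k.\<close>
definition conv_mat :: "nat \<Rightarrow> nat \<Rightarrow> nat \<Rightarrow> nat \<Rightarrow> (nat \<Rightarrow> real) \<Rightarrow> nat \<Rightarrow> nat \<Rightarrow> real" where
  "conv_mat d' d'' k s w j c =
     (if 1 \<le> j \<and> j \<le> d'' \<and> 1 \<le> c \<and> c \<le> d' \<and> (j - 1) * s < c \<and> c \<le> (j - 1) * s + k
      then w (c - (j - 1) * s) else 0)"

definition mat_mul :: "(nat \<Rightarrow> nat \<Rightarrow> real) \<Rightarrow> (nat \<Rightarrow> nat \<Rightarrow> real) \<Rightarrow> nat \<Rightarrow> nat \<Rightarrow> nat \<Rightarrow> real" where
  "mat_mul A B m j c = (\<Sum>l = 1..m. A j l * B l c)"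

fun conv_prod :: "(nat \<Rightarrow> nat) \<Rightarrow> (nat \<Rightarrow> nat) \<Rightarrow> (nat \<Rightarrow> nat) \<Rightarrow> (nat \<Rightarrow> nat \<Rightarrow> real) \<Rightarrow> nat \<Rightarrow> nat \<Rightarrow> nat \<Rightarrow> real" where
  "conv_prod d k s w 0 = (\<lambda>j c. if 1 \<le> j \<and> j \<le> d 0 \<and> j = c then 1 else 0)"
| "conv_prod d k s w (Suc i) =
     mat_mul (conv_mat (d i) (d (Suc i)) (k (Suc i)) (s (Suc i)) (w (Suc i)))
             (conv_prod d k s w i) (d i)"

definition final_width :: "nat \<Rightarrow> (nat \<Rightarrow> nat) \<Rightarrow> (nat \<Rightarrow> nat) \<Rightarrow> nat" where
  "final_width N k s = k 1 + (\<Sum>i = 2..N. (k i - 1) * (\<Prod>m = 1..i - 1. s m))"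

text \<open>Final filter v = pi(w): Pi(w) = W_N ... W_1 is convolutional with filter v,
  so v_n is the (1,n) entry of Pi(w), for n = 1..k_v.\<close>
definition final_filter :: "nat \<Rightarrow> (nat \<Rightarrow> nat) \<Rightarrow> (nat \<Rightarrow> nat) \<Rightarrow> (nat \<Rightarrow> nat) \<Rightarrow> (nat \<Rightarrow> nat \<Rightarrow> real) \<Rightarrow> nat \<Rightarrow> real" where
  "final_filter N d k s w n = conv_prod d k s w N 1 n"

definition norm1_final :: "nat \<Rightarrow> (nat \<Rightarrow> nat) \<Rightarrow> (nat \<Rightarrow> nat) \<Rightarrow> (nat \<Rightarrow> nat) \<Rightarrow> (nat \<Rightarrow> nat \<Rightarrow> real) \<Rightarrow> real" where
  "norm1_final N d k s w = (\<Sum>n = 1..final_width N k s. \<bar>final_filter N d k s w n\<bar>)"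

definition sqnorm_layer :: "(nat \<Rightarrow> nat) \<Rightarrow> (nat \<Rightarrow> nat \<Rightarrow> real) \<Rightarrow> nat \<Rightarrow> real" where
  "sqnorm_layer k w i = (\<Sum>n = 1..k i. (w i n)\<^sup>2)"

end

theory Submission
  imports Defs "Berlekamp_Zassenhaus.Factor_Bound"
begin

definition SS :: "(nat \<Rightarrow> nat) \<Rightarrow> nat \<Rightarrow> nat" where
  "SS s i = (\<Prod>m\<in>{1..<i}. s m)"

definition PC :: "(nat \<Rightarrow> nat) \<Rightarrow> (nat \<Rightarrow> nat) \<Rightarrow> (nat \<Rightarrow> nat \<Rightarrow> real) \<Rightarrow> nat \<Rightarrow> complex poly" where
  "PC k s w i = (\<Sum>n\<in>{1..k i}. monom (complex_of_real (w i n)) ((n - 1) * SS s i))"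

definition QC :: "(nat \<Rightarrow> nat) \<Rightarrow> (nat \<Rightarrow> nat) \<Rightarrow> (nat \<Rightarrow> nat \<Rightarrow> real) \<Rightarrow> nat \<Rightarrow> complex poly" where
  "QC k s w i = (\<Prod>m\<in>{1..i}. PC k s w m)"

definition cf :: "complex poly \<Rightarrow> int \<Rightarrow> complex" where
  "cf p x = (if x < 0 then 0 else poly.coeff p (nat x))"

lemma SS_Suc: "i \<ge> 1 \<Longrightarrow> SS s (Suc i) = SS s i * s i"
  unfolding SS_def by (simp add: prod.atLeastLessThan_Suc mult.commute)

lemma SS_1: "SS s 1 = 1" unfolding SS_def by simp
lemma SS_0: "SS s 0 = 1" unfolding SS_def by simp

lemma QC_Suc: "QC k s w (Suc i) = PC k s w (Suc i) * QC k s w i"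
  unfolding QC_def by (simp add: prod.cl_ivl_Suc mult.commute)

lemma QC_0: "QC k s w 0 = 1" unfolding QC_def by simp

lemma cf_monom_mult: "cf (monom a m * p) x = a * cf p (x - int m)"
  unfolding cf_def by (auto simp: coeff_monom_mult nat_diff_distrib)

lemma cf_sum: "cf (sum f A) x = (\<Sum>a\<in>A. cf (f a) x)"
  unfolding cf_def by (auto simp: coeff_sum)

lemma cf_sum_mult: "cf (sum f A * p) x = (\<Sum>a\<in>A. cf (f a * p) x)"
  by (simp add: sum_distrib_right cf_sum)

lemma arch_step:
  assumes arch: "is_architecture N d k s" and i: "Suc i \<le> N"
  shows "d i = (d (Suc i) - 1) * s (Suc i) + k (Suc i)" "0 < s (Suc i)" "0 < k (Suc i)"
    "0 < d (Suc i)"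
proof -
  have a: "0 < k (Suc i)" "0 < s (Suc i)"
    "real (d (Suc i)) = (real (d i) - real (k (Suc i))) / real (s (Suc i)) + 1"
    "0 < d (Suc i)"
    using arch i unfolding is_architecture_def by auto
  then have "real (d (Suc i)) - 1 = (real (d i) - real (k (Suc i))) / real (s (Suc i))" by simp
  then have "(real (d (Suc i)) - 1) * real (s (Suc i)) = real (d i) - real (k (Suc i))"
    using a(2) by (simp add: field_simps)
  then have "real ((d (Suc i) - 1) * s (Suc i) + k (Suc i)) = real (d i)"
    using a(4) by (simp add: of_nat_diff)
  then show "d i = (d (Suc i) - 1) * s (Suc i) + k (Suc i)" by linarith
  show "0 < s (Suc i)" "0 < k (Suc i)" "0 < d (Suc i)" using a by auto
qed

lemma conv_key:
  assumes arch: "is_architecture N d k s"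
  shows "i \<le> N \<Longrightarrow> 1 \<le> j \<Longrightarrow> j \<le> d i \<Longrightarrow>
    complex_of_real (conv_prod d k s w i j c) =
      cf (QC k s w i) (int c - 1 - (int j - 1) * int (SS s (Suc i)))"
proof (induction i arbitrary: j c)
  case 0
  then show ?case by (auto simp: QC_0 SS_def cf_def)
next
  case (Suc i)
  note st = arch_step[OF arch Suc.prems(1)]
  let ?s = "s (Suc i)" and ?k = "k (Suc i)"
  let ?M = "conv_mat (d i) (d (Suc i)) ?k ?s (w (Suc i))"
  have sub: "{(j - 1) * ?s + 1 .. (j - 1) * ?s + ?k} \<subseteq> {1..d i}"
  proof -
    have "(j - 1) * ?s \<le> (d (Suc i) - 1) * ?s" using Suc.prems by (intro mult_le_mono1) simp
    then show ?thesis using st(1) by auto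
  qed
  have "conv_prod d k s w (Suc i) j c = (\<Sum>l = 1..d i. ?M j l * conv_prod d k s w i l c)"
    by (simp add: mat_mul_def)
  also have "\<dots> = (\<Sum>l \<in> {(j - 1) * ?s + 1 .. (j - 1) * ?s + ?k}. ?M j l * conv_prod d k s w i l c)"
  proof (rule sum.mono_neutral_right[OF finite_atLeastAtMost sub])
    show "\<forall>l\<in>{1..d i} - {(j - 1) * ?s + 1 .. (j - 1) * ?s + ?k}. ?M j l * conv_prod d k s w i l c = 0"
    proof
      fix l assume "l \<in> {1..d i} - {(j - 1) * ?s + 1 .. (j - 1) * ?s + ?k}"
      then have "\<not> ((j - 1) * ?s < l \<and> l \<le> (j - 1) * ?s + ?k)" by auto
      then show "?M j l * conv_prod d k s w i l c = 0" unfolding conv_mat_def by auto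
    qed
  qed
  also have "\<dots> = (\<Sum>n \<in> {1..?k}. w (Suc i) n * conv_prod d k s w i ((j - 1) * ?s + n) c)"
  proof -
    have "(\<Sum>l \<in> {(j - 1) * ?s + 1 .. (j - 1) * ?s + ?k}. ?M j l * conv_prod d k s w i l c)
       = (\<Sum>n \<in> {1..?k}. ?M j ((j - 1) * ?s + n) * conv_prod d k s w i ((j - 1) * ?s + n) c)"
      by (rule sum.reindex_bij_witness[of _ "\<lambda>n. (j - 1) * ?s + n" "\<lambda>l. l - (j - 1) * ?s"]) auto
    also have "\<dots> = (\<Sum>n \<in> {1..?k}. w (Suc i) n * conv_prod d k s w i ((j - 1) * ?s + n) c)"
      by (rule sum.cong) (use sub Suc.prems in \<open>auto simp: conv_mat_def\<close>)
    finally show ?thesis .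
  qed
  finally have C: "conv_prod d k s w (Suc i) j c = (\<Sum>n \<in> {1..?k}. w (Suc i) n * conv_prod d k s w i ((j - 1) * ?s + n) c)" .
  have L: "complex_of_real (conv_prod d k s w (Suc i) j c) =
     (\<Sum>n \<in> {1..?k}. complex_of_real (w (Suc i) n) *
        cf (QC k s w i) (int c - 1 - (int ((j - 1) * ?s + n) - 1) * int (SS s (Suc i))))"
  proof -
    have h: "\<And>n. n \<in> {1..?k} \<Longrightarrow> complex_of_real (conv_prod d k s w i ((j - 1) * ?s + n) c) =
       cf (QC k s w i) (int c - 1 - (int ((j - 1) * ?s + n) - 1) * int (SS s (Suc i)))"
    proof -
      fix n assume "n \<in> {1..?k}"
      then have "1 \<le> (j - 1) * ?s + n" "(j - 1) * ?s + n \<le> d i" using sub by auto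
      then show "complex_of_real (conv_prod d k s w i ((j - 1) * ?s + n) c) =
       cf (QC k s w i) (int c - 1 - (int ((j - 1) * ?s + n) - 1) * int (SS s (Suc i)))"
        using Suc.IH Suc.prems(1) by simp
    qed
    have "complex_of_real (conv_prod d k s w (Suc i) j c) =
      (\<Sum>n \<in> {1..?k}. complex_of_real (w (Suc i) n) * complex_of_real (conv_prod d k s w i ((j - 1) * ?s + n) c))"
      unfolding C by (simp add: of_real_sum)
    also have "\<dots> = (\<Sum>n \<in> {1..?k}. complex_of_real (w (Suc i) n) *
        cf (QC k s w i) (int c - 1 - (int ((j - 1) * ?s + n) - 1) * int (SS s (Suc i))))"
      by (rule sum.cong[OF refl]) (subst h, assumption, rule refl)
    finally show ?thesis .
  qed
  have R: "cf (QC k s w (Suc i)) (int c - 1 - (int j - 1) * int (SS s (Suc (Suc i)))) =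
     (\<Sum>n \<in> {1..?k}. complex_of_real (w (Suc i) n) *
        cf (QC k s w i) (int c - 1 - (int j - 1) * int (SS s (Suc (Suc i))) - int ((n - 1) * SS s (Suc i))))"
    unfolding QC_Suc PC_def cf_sum_mult cf_monom_mult by simp
  have SSs: "SS s (Suc (Suc i)) = SS s (Suc i) * ?s" using SS_Suc[of "Suc i" s] by simp
  show ?case unfolding L R
  proof (rule sum.cong[OF refl])
    fix n assume n: "n \<in> {1..?k}"
    have "int c - 1 - (int ((j - 1) * ?s + n) - 1) * int (SS s (Suc i)) =
          int c - 1 - (int j - 1) * int (SS s (Suc (Suc i))) - int ((n - 1) * SS s (Suc i))"
    proof -
      obtain j' where j': "j = Suc j'" using Suc.prems(2) by (cases j) auto
      obtain n' where n': "n = Suc n'" using n by (cases n) auto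
      show ?thesis unfolding SSs j' n' by (simp add: algebra_simps)
    qed
    then show "complex_of_real (w (Suc i) n) * cf (QC k s w i) (int c - 1 - (int ((j - 1) * ?s + n) - 1) * int (SS s (Suc i))) =
       complex_of_real (w (Suc i) n) * cf (QC k s w i) (int c - 1 - (int j - 1) * int (SS s (Suc (Suc i))) - int ((n - 1) * SS s (Suc i)))"
      by (simp only:)
  qed
qed

lemma drift_bound:
  fixes a \<delta> :: "nat \<Rightarrow> real"
  assumes "\<forall>i\<in>{1..N - 1}. a (i + 1) - a i = \<delta> i"
  shows "i \<in> {1..N} \<Longrightarrow> \<bar>a i - a 1\<bar> \<le> (\<Sum>m\<in>{1..<i}. \<bar>\<delta> m\<bar>)"
proof (induction i)
  case 0 then show ?case by simp
next
  case (Suc i)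
  show ?case
  proof (cases "i = 0")
    case True then show ?thesis by simp
  next
    case False
    then have i: "i \<in> {1..N}" "i \<in> {1..N-1}" using Suc.prems by auto
    have "a (Suc i) - a i = \<delta> i" using assms i(2) by auto
    then have "\<bar>a (Suc i) - a 1\<bar> \<le> \<bar>a i - a 1\<bar> + \<bar>\<delta> i\<bar>" by linarith
    also have "\<dots> \<le> (\<Sum>m\<in>{1..<i}. \<bar>\<delta> m\<bar>) + \<bar>\<delta> i\<bar>" using Suc.IH i(1) by simp
    also have "\<dots> = (\<Sum>m\<in>{1..<Suc i}. \<bar>\<delta> m\<bar>)" using False by (simp add: sum.atLeastLessThan_Suc)
    finally show ?thesis .
  qed
qed

lemma final_comb:
  fixes a \<delta> :: "nat \<Rightarrow> real"
  assumes nn: "\<forall>i\<in>{1..N}. 0 \<le> a i"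
    and pr: "(\<Prod>i\<in>{1..N}. a i) \<le> B"
    and dl: "\<forall>i\<in>{1..N - 1}. a (i + 1) - a i = \<delta> i"
  shows "\<forall>i\<in>{1..N}. a i \<le> 2 * (\<Sum>m\<in>{1..<N}. \<bar>\<delta> m\<bar>) + 1 + \<bar>B\<bar>"
proof (rule ccontr)
  let ?K = "\<Sum>m\<in>{1..<N}. \<bar>\<delta> m\<bar>"
  assume "\<not> ?thesis"
  then obtain i where i: "i \<in> {1..N}" "a i > 2 * ?K + 1 + \<bar>B\<bar>" by auto
  have mono: "(\<Sum>m\<in>{1..<j}. \<bar>\<delta> m\<bar>) \<le> ?K" if "j \<in> {1..N}" for j
    by (rule sum_mono2) (use that in auto)
  have ge1: "a j \<ge> 1" if j: "j \<in> {1..N}" for j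
  proof -
    have "\<bar>a j - a 1\<bar> \<le> ?K" using drift_bound[OF dl j] mono[OF j] by linarith
    moreover have "\<bar>a i - a 1\<bar> \<le> ?K" using drift_bound[OF dl i(1)] mono[OF i(1)] by linarith
    ultimately show ?thesis using i(2) by linarith
  qed
  have "(\<Prod>j\<in>{1..N}. a j) = a i * (\<Prod>j\<in>{1..N} - {i}. a j)"
    using i(1) by (simp add: prod.remove)
  also have "\<dots> \<ge> a i * 1"
    using ge1 i nn by (intro mult_left_mono prod_ge_1) auto
  finally have "a i \<le> B" using pr by linarith
  then show False using i(2) by (smt (verit) sum_nonneg abs_ge_zero)
qed

lemma SS_pos: assumes arch: "is_architecture N d k s" and "i \<le> N" shows "0 < SS s i"
  unfolding SS_def using arch assms(2) unfolding is_architecture_def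
  by (intro prod_pos) auto

lemma degree_PC: "degree (PC k s w i) \<le> (k i - 1) * SS s i"
  unfolding PC_def
proof (rule degree_sum_le)
  fix n assume "n \<in> {1..k i}"
  then have "(n - 1) * SS s i \<le> (k i - 1) * SS s i" by (intro mult_le_mono1) auto
  then show "degree (monom (complex_of_real (w i n)) ((n - 1) * SS s i)) \<le> (k i - 1) * SS s i"
    using degree_monom_le order_trans by blast
qed simp

lemma degree_QC: "degree (QC k s w i) \<le> (\<Sum>m\<in>{1..i}. (k m - 1) * SS s m)"
proof (induction i)
  case 0 then show ?case by (simp add: QC_0)
next
  case (Suc i)
  have "degree (QC k s w (Suc i)) \<le> degree (PC k s w (Suc i)) + degree (QC k s w i)"
    unfolding QC_Suc by (rule degree_mult_le)
  also have "\<dots> \<le> (k (Suc i) - 1) * SS s (Suc i) + (\<Sum>m\<in>{1..i}. (k m - 1) * SS s m)"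
    using degree_PC Suc.IH by (rule add_mono)
  also have "\<dots> = (\<Sum>m\<in>{1..Suc i}. (k m - 1) * SS s m)" by (simp add: sum.cl_ivl_Suc)
  finally show ?case .
qed

lemma coeff_PC:
  assumes arch: "is_architecture N d k s" and i: "i \<le> N" and n: "n \<in> {1..k i}"
  shows "poly.coeff (PC k s w i) ((n - 1) * SS s i) = complex_of_real (w i n)"
proof -
  have S: "0 < SS s i" using SS_pos[OF arch i] .
  have eq: "((n' - 1) * SS s i = (n - 1) * SS s i) = (n' = n)" if "n' \<in> {1..k i}" for n'
    using that n S by auto
  have "poly.coeff (PC k s w i) ((n - 1) * SS s i) =
     (\<Sum>n'\<in>{1..k i}. if (n' - 1) * SS s i = (n - 1) * SS s i then complex_of_real (w i n') else 0)"
    unfolding PC_def coeff_sum coeff_monom by simp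
  also have "\<dots> = (\<Sum>n'\<in>{1..k i}. if n' = n then complex_of_real (w i n') else 0)"
    by (rule sum.cong[OF refl], subst eq, assumption, rule refl)
  also have "\<dots> = complex_of_real (w i n)" using n by simp
  finally show ?thesis .
qed

lemma M_QC: "mahler_measure_poly (QC k s w i) = (\<Prod>m\<in>{1..i}. mahler_measure_poly (PC k s w m))"
proof (induction i)
  case 0
  have "mahler_measure_poly [:1:] = 1" by (simp only: mahler_measure_constant) simp
  then show ?case by (simp add: QC_0 pCons_one)
next
  case (Suc i)
  then show ?case by (simp add: QC_Suc measure_eq_prod prod.cl_ivl_Suc)
qed

lemma lc_le_M: "cmod (lead_coeff h) \<le> mahler_measure_poly h"
proof -
  have "cmod (lead_coeff h) * 1 \<le> cmod (lead_coeff h) * mahler_measure_monic h"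
    by (intro mult_left_mono mahler_measure_monic_ge_1) simp
  then show ?thesis unfolding mahler_measure_poly_via_monic by simp
qed

lemma M_nonneg: "0 \<le> mahler_measure_poly h"
  unfolding mahler_measure_poly_via_monic
  by (intro mult_nonneg_nonneg mahler_measure_monic_ge_0) simp

lemma coeff_bound:
  assumes "degree h \<le> G"
  shows "cmod (poly.coeff h t) \<le> 2 ^ (G + 1) * mahler_measure_poly h"
proof -
  have b1: "real (degree h - 1 choose t) \<le> 2 ^ G"
  proof -
    have "degree h - 1 choose t \<le> 2 ^ (degree h - 1)" by (rule binomial_le_pow2)
    also have "\<dots> \<le> 2 ^ G" using assms by (intro power_increasing) auto
    finally have "real (degree h - 1 choose t) \<le> real (2 ^ G)" by (simp only: of_nat_le_iff)
    then show ?thesis by simp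
  qed
  have b2: "real (min t 1 * (degree h - 1 choose (t - 1))) \<le> 2 ^ G"
  proof -
    have "min t 1 * (degree h - 1 choose (t - 1)) \<le> degree h - 1 choose (t - 1)"
      by (cases t) auto
    also have "\<dots> \<le> 2 ^ (degree h - 1)" by (rule binomial_le_pow2)
    also have "\<dots> \<le> 2 ^ G" using assms by (intro power_increasing) auto
    finally have "real (min t 1 * (degree h - 1 choose (t - 1))) \<le> real (2 ^ G)" by (simp only: of_nat_le_iff)
    then show ?thesis by simp
  qed
  have M0: "0 \<le> mahler_measure_poly h" by (rule M_nonneg)
  have "cmod (poly.coeff h t) \<le> real (degree h - 1 choose t) * mahler_measure_poly h +
    real (min t 1 * (degree h - 1 choose (t - 1))) * cmod (lead_coeff h)"
    by (rule mignotte_helper_coeff)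
  also have "\<dots> \<le> 2 ^ G * mahler_measure_poly h + 2 ^ G * mahler_measure_poly h"
    using b1 b2 M0 lc_le_M[of h] by (intro add_mono mult_mono) auto
  finally show ?thesis by (simp add: algebra_simps)
qed

lemma norm2_eq: "(\<Sum>a\<leftarrow>coeffs p. (cmod a)\<^sup>2) = (\<Sum>t<Suc (degree p). (cmod (poly.coeff p t))\<^sup>2)"
proof (cases "p = 0")
  case True then show ?thesis by simp
next
  case False
  then show ?thesis unfolding coeffs_def
    by (simp add: interv_sum_list_conv_sum_set_nat lessThan_atLeast0 o_def)
qed

lemma sq_sum_le:
  fixes y :: "'a \<Rightarrow> real"
  assumes "finite A" "\<forall>x\<in>A. 0 \<le> y x"
  shows "(\<Sum>x\<in>A. (y x)\<^sup>2) \<le> (\<Sum>x\<in>A. y x)\<^sup>2"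
  using assms
proof (induction A rule: finite_induct)
  case empty then show ?case by simp
next
  case (insert a A)
  have "0 \<le> (\<Sum>x\<in>A. y x)" using insert.prems by (intro sum_nonneg) auto
  moreover have "0 \<le> y a" using insert.prems by auto
  ultimately have "0 \<le> 2 * (\<Sum>x\<in>A. y x) * y a" by simp
  then show ?case using insert by (simp add: power2_sum)
qed

definition GG :: "nat \<Rightarrow> (nat \<Rightarrow> nat) \<Rightarrow> (nat \<Rightarrow> nat) \<Rightarrow> nat" where
  "GG N k s = (\<Sum>m\<in>{1..N}. (k m - 1) * SS s m)"

lemma width_eq:
  assumes arch: "is_architecture N d k s" and N: "1 \<le> N"
  shows "final_width N k s = GG N k s + 1"
proof -
  have k1: "0 < k 1" using arch N unfolding is_architecture_def by auto
  have "GG N k s = (k 1 - 1) * SS s 1 + (\<Sum>m\<in>{2..N}. (k m - 1) * SS s m)"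
    unfolding GG_def using N by (simp add: sum.atLeast_Suc_atMost numeral_2_eq_2)
  also have "(\<Sum>m\<in>{2..N}. (k m - 1) * SS s m) = (\<Sum>m\<in>{2..N}. (k m - 1) * (\<Prod>j = 1..m - 1. s j))"
  proof (rule sum.cong[OF refl])
    fix m assume "m \<in> {2..N}"
    then obtain m' where "m = Suc m'" by (cases m) auto
    then show "(k m - 1) * SS s m = (k m - 1) * (\<Prod>j = 1..m - 1. s j)"
      unfolding SS_def by (simp add: atLeastLessThanSuc_atLeastAtMost)
  qed
  finally show ?thesis unfolding final_width_def SS_1 using k1 by simp
qed

lemma norm1_ge_M:
  assumes arch: "is_architecture N d k s" and N: "1 \<le> N"
  shows "mahler_measure_poly (QC k s w N) \<le> norm1_final N d k s w"
proof -
  let ?G = "GG N k s"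
  let ?Q = "QC k s w N"
  have dN: "1 \<le> d N" using arch N unfolding is_architecture_def by auto
  have fv: "\<bar>final_filter N d k s w n\<bar> = cmod (poly.coeff ?Q (n - 1))" if n: "1 \<le> n" for n
  proof -
    have "complex_of_real (final_filter N d k s w n) = cf ?Q (int n - 1 - (int 1 - 1) * int (SS s (Suc N)))"
      unfolding final_filter_def using conv_key[OF arch, of N 1 w n] dN by simp
    also have "\<dots> = poly.coeff ?Q (n - 1)" using n unfolding cf_def by (simp add: nat_diff_distrib)
    finally show ?thesis by (metis norm_of_real)
  qed
  have "norm1_final N d k s w = (\<Sum>n = 1..?G + 1. cmod (poly.coeff ?Q (n - 1)))"
    unfolding norm1_final_def width_eq[OF arch N] by (rule sum.cong[OF refl]) (simp add: fv)
  also have "\<dots> = (\<Sum>t < ?G + 1. cmod (poly.coeff ?Q t))"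
    by (rule sum.reindex_bij_witness[of _ Suc "\<lambda>n. n - 1"]) auto
  finally have n1: "norm1_final N d k s w = (\<Sum>t < ?G + 1. cmod (poly.coeff ?Q t))" .
  have degQ: "degree ?Q \<le> ?G" unfolding GG_def by (rule degree_QC)
  have "mahler_measure_poly ?Q \<le> sqrt (\<Sum>a\<leftarrow>coeffs ?Q. (cmod a)\<^sup>2)" by (rule Landau_inequality)
  also have "(\<Sum>a\<leftarrow>coeffs ?Q. (cmod a)\<^sup>2) \<le> (\<Sum>t < ?G + 1. (cmod (poly.coeff ?Q t))\<^sup>2)"
    unfolding norm2_eq by (rule sum_mono2) (use degQ in auto)
  also have "\<dots> \<le> (\<Sum>t < ?G + 1. cmod (poly.coeff ?Q t))\<^sup>2"
    by (rule sq_sum_le) auto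
  also have "sqrt \<dots> = (\<Sum>t < ?G + 1. cmod (poly.coeff ?Q t))"
    by (simp add: sum_nonneg)
  finally show ?thesis unfolding n1 by simp
qed

lemma layer_bound:
  assumes arch: "is_architecture N d k s" and i: "i \<in> {1..N}"
  shows "sqnorm_layer k w i \<le> real (\<Sum>m\<in>{1..N}. k m) * 4 ^ (GG N k s + 1) * (mahler_measure_poly (PC k s w i))\<^sup>2"
proof -
  let ?G = "GG N k s"
  let ?M = "mahler_measure_poly (PC k s w i)"
  have "(k i - 1) * SS s i \<le> ?G" unfolding GG_def
    using i by (intro member_le_sum[of i "{1..N}" "\<lambda>m. (k m - 1) * SS s m"]) auto
  then have deg: "degree (PC k s w i) \<le> ?G" using degree_PC order_trans by blast
  have wb: "(w i n)\<^sup>2 \<le> 4 ^ (?G + 1) * ?M\<^sup>2" if n: "n \<in> {1..k i}" for n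
  proof -
    have "\<bar>w i n\<bar> = cmod (poly.coeff (PC k s w i) ((n - 1) * SS s i))"
      using coeff_PC[OF arch _ n] i by simp
    also have "\<dots> \<le> 2 ^ (?G + 1) * ?M" by (rule coeff_bound[OF deg])
    finally have "\<bar>w i n\<bar>\<^sup>2 \<le> (2 ^ (?G + 1) * ?M)\<^sup>2" by (intro power_mono) auto
    moreover have "(2 ^ (?G + 1) * ?M)\<^sup>2 = 4 ^ (?G + 1) * ?M\<^sup>2"
    proof -
      have "((2::real) ^ (?G + 1))\<^sup>2 = 4 ^ (?G + 1)"
        unfolding power2_eq_square power_mult_distrib[symmetric] by simp
      then show ?thesis by (simp only: power_mult_distrib)
    qed
    ultimately show ?thesis by simp
  qed
  have "sqnorm_layer k w i \<le> (\<Sum>n = 1..k i. 4 ^ (?G + 1) * ?M\<^sup>2)"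
    unfolding sqnorm_layer_def by (rule sum_mono) (rule wb)
  also have "\<dots> = real (k i) * (4 ^ (?G + 1) * ?M\<^sup>2)" by simp
  also have "\<dots> \<le> real (\<Sum>m\<in>{1..N}. k m) * (4 ^ (?G + 1) * ?M\<^sup>2)"
  proof (rule mult_right_mono)
    show "real (k i) \<le> real (\<Sum>m\<in>{1..N}. k m)"
      using i by (simp only: of_nat_le_iff) (intro member_le_sum, auto)
  qed simp
  finally show ?thesis by (simp add: mult.assoc)
qed

lemma prod_layer_bound:
  assumes arch: "is_architecture N d k s"
  shows "(\<Prod>i\<in>{1..N}. sqnorm_layer k w i) \<le>
     (real (\<Sum>m\<in>{1..N}. k m) * 4 ^ (GG N k s + 1)) ^ N * (mahler_measure_poly (QC k s w N))\<^sup>2"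
proof -
  let ?A = "real (\<Sum>m\<in>{1..N}. k m) * 4 ^ (GG N k s + 1)"
  have "(\<Prod>i\<in>{1..N}. sqnorm_layer k w i) \<le> (\<Prod>i\<in>{1..N}. ?A * (mahler_measure_poly (PC k s w i))\<^sup>2)"
  proof (rule prod_mono)
    fix i assume i: "i \<in> {1..N}"
    have "0 \<le> sqnorm_layer k w i" unfolding sqnorm_layer_def by (intro sum_nonneg) simp
    then show "0 \<le> sqnorm_layer k w i \<and> sqnorm_layer k w i \<le> ?A * (mahler_measure_poly (PC k s w i))\<^sup>2"
      using layer_bound[OF arch i, of w] by simp
  qed
  also have "\<dots> = ?A ^ N * (\<Prod>i\<in>{1..N}. mahler_measure_poly (PC k s w i))\<^sup>2"
    by (simp only: prod.distrib prod_power_distrib prod_constant card_atLeastAtMost diff_Suc_1 power_mult_distrib)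
  also have "\<dots> = ?A ^ N * (mahler_measure_poly (QC k s w N))\<^sup>2" by (simp add: M_QC)
  finally show ?thesis .
qed

theorem lemma3p5:
  fixes N :: nat and d k s :: "nat \<Rightarrow> nat"
  assumes arch: "is_architecture N d k s"
  shows "\<forall>T > 0. \<forall>\<delta> :: nat \<Rightarrow> real. \<exists>\<tau> :: real.
           \<forall>w :: nat \<Rightarrow> nat \<Rightarrow> real.
             norm1_final N d k s w \<le> T \<and>
             (\<forall>i\<in>{1..N - 1}. sqnorm_layer k w (i + 1) - sqnorm_layer k w i = \<delta> i)
             \<longrightarrow> (\<forall>i\<in>{1..N}. sqnorm_layer k w i \<le> \<tau>)"
proof (intro allI impI)
  fix T :: real and \<delta> :: "nat \<Rightarrow> real"
  assume T: "T > 0"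
  let ?A = "real (\<Sum>m\<in>{1..N}. k m) * 4 ^ (GG N k s + 1)"
  let ?B = "?A ^ N * T\<^sup>2"
  show "\<exists>\<tau>. \<forall>w. norm1_final N d k s w \<le> T \<and>
             (\<forall>i\<in>{1..N - 1}. sqnorm_layer k w (i + 1) - sqnorm_layer k w i = \<delta> i)
             \<longrightarrow> (\<forall>i\<in>{1..N}. sqnorm_layer k w i \<le> \<tau>)"
  proof (intro exI allI impI)
    fix w :: "nat \<Rightarrow> nat \<Rightarrow> real"
    assume H: "norm1_final N d k s w \<le> T \<and>
             (\<forall>i\<in>{1..N - 1}. sqnorm_layer k w (i + 1) - sqnorm_layer k w i = \<delta> i)"
    then have H1: "norm1_final N d k s w \<le> T"
      and H2: "\<forall>i\<in>{1..N - 1}. sqnorm_layer k w (i + 1) - sqnorm_layer k w i = \<delta> i" by auto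
    show "\<forall>i\<in>{1..N}. sqnorm_layer k w i \<le> 2 * (\<Sum>m\<in>{1..<N}. \<bar>\<delta> m\<bar>) + 1 + \<bar>?B\<bar>"
    proof (cases "N = 0")
      case True then show ?thesis by simp
    next
      case False
      then have N: "1 \<le> N" by simp
      have M: "mahler_measure_poly (QC k s w N) \<le> T" using norm1_ge_M[OF arch N, of w] H1 by linarith
      have M2: "(mahler_measure_poly (QC k s w N))\<^sup>2 \<le> T\<^sup>2"
        using M M_nonneg by (intro power_mono) auto
      have A0: "0 \<le> ?A ^ N" by (intro zero_le_power mult_nonneg_nonneg) (auto intro: sum_nonneg)
      have PB: "(\<Prod>i\<in>{1..N}. sqnorm_layer k w i) \<le> ?B"
        using prod_layer_bound[OF arch, of w] mult_left_mono[OF M2 A0] by linarith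
      have NN: "\<forall>i\<in>{1..N}. 0 \<le> sqnorm_layer k w i"
        unfolding sqnorm_layer_def by (auto intro: sum_nonneg)
      show ?thesis by (rule final_comb[OF NN PB H2])
    qed
  qed
qed

end
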